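(* Let $\delta>0$ and $q\ge 1$. There is a constant $C_{\delta,q}>0$ depending only on $\delta$ and $q$ such that for every nonnegative measurable $f$ on $\mathbb{T}^3\times\mathbb{R}^3\times\mathbb{R}^+$ with $0<\|f\|_{L^\infty_q}<\infty$, at every point $x$ where $\rho(x)>0$ and $0<T_\delta(x)<\infty$, $$\frac{\rho\,|U|^{3+\delta+q}}{\big[(T_\delta+|U|^2)\,T_\delta\big]^{\frac{3+\delta}{2}}}\ \le\ C_{\delta,q}\,\|f\|_{L^\infty_q}.$$
   Context: Fix $\delta>0$. For a nonnegative measurable function $f=f(x,v,I)$ on $\mathbb{T}^3\times\mathbb{R}^3\times\mathbb{R}^+$ define at each $x$ the macroscopic fields $\rho=\int_{\mathbb{R}^3\times\mathbb{R}^+}f\,dv\,dI$, $U=\rho^{-1}\int vf\,dv\,dI$, the translational temperature $T_{tr}$ by $\frac32\rho T_{tr}=\int\frac12|v-U|^2 f\,dv\,dI$, the non-translational temperature $T_{I,\delta}$ by $\frac{\delta}{2}\rho T_{I,\delta}=\int I^{2/\delta}f\,dv\,dI$, and the temperature $T_\delta=\frac{3}{3+\delta}T_{tr}+\frac{\delta}{3+\delta}T_{I,\delta}$ (equivalently $\frac{3+\delta}{2}\rho T_\delta=\int(\frac12|v-U|^2+I^{2/\delta})f\,dv\,dI$). The weighted norm is $\|f\|_{L^\infty_q}=\operatorname{ess\,sup}_{x,v,I}|f(x,v,I)|(1+|v|^2+I^{2/\delta})^{q/2}$. *)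

theory Defs
  imports "HOL-Analysis.Analysis" "HOL-Probability.Essential_Supremum"
begin

text \<open>Spatial domain: the torus T^3 represented by the unit cube [0,1]^3 with Lebesgue measure
(boundary has measure zero).  Velocity v in R^3, internal energy variable I in R^+ = (0,inf).\<close>

definition Xmeas :: "(real^3) measure" where
  "Xmeas = restrict_space lborel (cbox 0 1)"

definition VImeas :: "((real^3) \<times> real) measure" where
  "VImeas = lborel \<Otimes>\<^sub>M restrict_space lborel {0<..}"

definition Fullmeas :: "((real^3) \<times> ((real^3) \<times> real)) measure" where
  "Fullmeas = Xmeas \<Otimes>\<^sub>M VImeas"

definition Linfq_norm :: "real \<Rightarrow> real \<Rightarrow> (real^3 \<Rightarrow> real^3 \<Rightarrow> real \<Rightarrow> real) \<Rightarrow> ereal" where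
  "Linfq_norm \<delta> q f = esssup Fullmeas
     (\<lambda>(x,(v,I)). ereal (\<bar>f x v I\<bar> * (1 + (norm v)^2 + I powr (2/\<delta>)) powr (q/2)))"

definition rho :: "(real^3 \<Rightarrow> real^3 \<Rightarrow> real \<Rightarrow> real) \<Rightarrow> real^3 \<Rightarrow> real" where
  "rho f x = (\<integral>(v,I). f x v I \<partial>VImeas)"

definition bulk_U :: "(real^3 \<Rightarrow> real^3 \<Rightarrow> real \<Rightarrow> real) \<Rightarrow> real^3 \<Rightarrow> real^3" where
  "bulk_U f x = (1 / rho f x) *\<^sub>R (\<integral>(v,I). f x v I *\<^sub>R v \<partial>VImeas)"

definition T_tr :: "(real^3 \<Rightarrow> real^3 \<Rightarrow> real \<Rightarrow> real) \<Rightarrow> real^3 \<Rightarrow> real" where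
  "T_tr f x = (2 / (3 * rho f x)) * (\<integral>(v,I). (1/2) * (norm (v - bulk_U f x))^2 * f x v I \<partial>VImeas)"

definition T_I :: "real \<Rightarrow> (real^3 \<Rightarrow> real^3 \<Rightarrow> real \<Rightarrow> real) \<Rightarrow> real^3 \<Rightarrow> real" where
  "T_I \<delta> f x = (2 / (\<delta> * rho f x)) * (\<integral>(v,I). I powr (2/\<delta>) * f x v I \<partial>VImeas)"

definition T_delta :: "real \<Rightarrow> (real^3 \<Rightarrow> real^3 \<Rightarrow> real \<Rightarrow> real) \<Rightarrow> real^3 \<Rightarrow> real" where
  "T_delta \<delta> f x = 3 / (3 + \<delta>) * T_tr f x + \<delta> / (3 + \<delta>) * T_I \<delta> f x"

end

theory Submission imports Defs begin

lemma sf_pos: "sigma_finite_measure (restrict_space lborel ({0<..}::real set))"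
  by (rule sigma_finite_measure_restrict_space) (auto intro: lborel.sigma_finite_measure_axioms)

lemma sf_VI: "sigma_finite_measure VImeas"
  unfolding VImeas_def by (intro sigma_finite_pair_measure sf_pos lborel.sigma_finite_measure_axioms)

lemma sf_X: "sigma_finite_measure Xmeas"
  unfolding Xmeas_def by (rule sigma_finite_measure_restrict_space) (auto intro: lborel.sigma_finite_measure_axioms)

lemma space_VI: "space VImeas = UNIV \<times> {0<..}"
  by (simp add: VImeas_def space_pair_measure space_restrict_space)

lemma meas_fst[measurable]: "fst \<in> borel_measurable VImeas"
  unfolding VImeas_def by measurable

lemma meas_snd[measurable]: "snd \<in> borel_measurable VImeas"
  unfolding VImeas_def by (rule measurable_snd'')  (simp add: measurable_restrict_space1)

lemma measure_box:
  fixes U :: "real^3" assumes "0 \<le> s" "0 \<le> t"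
  shows "emeasure VImeas (cbox (U - s *\<^sub>R 1) (U + s *\<^sub>R 1) \<times> {0<..t}) = ennreal ((2 * s) ^ 3 * t)"
proof -
  interpret sigma_finite_measure "restrict_space lborel ({0<..}::real set)" by (rule sf_pos)
  have e: "emeasure VImeas (cbox (U - s *\<^sub>R 1) (U + s *\<^sub>R 1) \<times> {0<..t}) =
     emeasure lborel (cbox (U - s *\<^sub>R 1) (U + s *\<^sub>R 1)) * emeasure (restrict_space lborel ({0<..}::real set)) {0<..t}"
    unfolding VImeas_def by (rule emeasure_pair_measure_Times) (auto simp: sets_restrict_space)
  have e2: "emeasure (restrict_space lborel ({0<..}::real set)) {0<..t} = ennreal t"
    using assms by (subst emeasure_restrict_space) auto
  have ne: "cbox (U - s *\<^sub>R 1) (U + s *\<^sub>R 1) \<noteq> {}"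
  proof -
    have "U \<in> cbox (U - s *\<^sub>R 1) (U + s *\<^sub>R 1)" using assms by (simp add: mem_box_cart)
    then show ?thesis by blast
  qed
  have c: "measure lborel (cbox (U - s *\<^sub>R 1) (U + s *\<^sub>R 1)) = (2 * s) ^ 3"
    using ne by (simp add: content_cbox_cart)
  have e1: "emeasure lborel (cbox (U - s *\<^sub>R 1) (U + s *\<^sub>R 1)) = ennreal ((2 * s) ^ 3)"
    using emeasure_eq_ennreal_measure[of lborel "cbox (U - s *\<^sub>R 1) (U + s *\<^sub>R 1)"]
      emeasure_lborel_cbox_finite[of "U - s *\<^sub>R 1" "U + s *\<^sub>R 1"] c by simp
  show ?thesis unfolding e e1 e2 using assms
    by (simp add: ennreal_mult)
qed

lemma alg:
  fixes a s K P N \<rho> q \<delta> :: real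
  assumes a: "a > 0" and K: "K > 0" and P: "P > 0" and s: "s = K * sqrt P / a"
    and h: "\<rho> * a \<le> 32 * N * (a/2) powr (1-q) * s powr (3+\<delta>)"
  shows "\<rho> * a powr (3+\<delta>+q) \<le> 32 * 2 powr (q-1) * K powr (3+\<delta>) * N * P powr ((3+\<delta>)/2)"
proof -
  define e where "e = 3 + \<delta>"
  have sp: "sqrt P powr e = P powr (e/2)"
    using P by (simp add: powr_half_sqrt[symmetric] powr_powr)
  have s1: "s powr e = K powr e * P powr (e/2) / a powr e"
    using a K P unfolding s by (simp add: powr_mult powr_divide sp)
  have s2: "(a/2) powr (1-q) = a powr (1-q) / 2 powr (1-q)"
    using a by (simp add: powr_divide)
  have t2: "2 powr (q-1) * 2 powr (1-q) = (1::real)"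
    by (simp add: powr_add[symmetric])
  have s3: "a powr (1-q) * a powr (2+\<delta>+q) = a powr e"
    unfolding e_def using a by (simp add: powr_add[symmetric])
  have s4: "a powr (3+\<delta>+q) = a * a powr (2+\<delta>+q)"
  proof -
    have "a * a powr (2+\<delta>+q) = a powr 1 * a powr (2+\<delta>+q)" using a by simp
    also have "\<dots> = a powr (1 + (2+\<delta>+q))" by (rule powr_add[symmetric])
    also have "1 + (2+\<delta>+q) = 3+\<delta>+q" by simp
    finally show ?thesis by simp
  qed
  have pe: "a powr e > 0" "2 powr (1-q) > (0::real)" using a by auto
  have "\<rho> * a powr (3+\<delta>+q) = (\<rho> * a) * a powr (2+\<delta>+q)" using s4 by simp
  also have "\<dots> \<le> (32 * N * (a/2) powr (1-q) * s powr e) * a powr (2+\<delta>+q)"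
    by (rule mult_right_mono[OF h[folded e_def]]) simp
  also have "\<dots> = 32 * N * K powr e * P powr (e/2) * (a powr (1-q) * a powr (2+\<delta>+q)) / (a powr e * 2 powr (1-q))"
    unfolding s1 s2 by (simp add: ac_simps)
  also have "\<dots> = 32 * N * K powr e * P powr (e/2) / 2 powr (1-q)"
    unfolding s3 using pe by simp
  also have "\<dots> = 32 * 2 powr (q-1) * K powr e * N * P powr (e/2)"
    using pe t2 by (simp add: field_simps)
  finally show ?thesis unfolding e_def .
qed

lemma core:
  fixes f :: "real^3 \<Rightarrow> real^3 \<Rightarrow> real \<Rightarrow> real" and x :: "real^3" and \<delta> q N :: real
  assumes dq: "\<delta> > 0" "q \<ge> 1" and Npos: "N > 0"
  and nn: "\<forall>v I. 0 \<le> f x v I"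
  and meas: "(\<lambda>(v,I). f x v I) \<in> borel_measurable VImeas"
  and int: "integrable VImeas (\<lambda>(v,I). (1 + (norm v)^2 + I powr (2/\<delta>)) * f x v I)"
  and bnd: "AE z in VImeas. (case z of (v,I) \<Rightarrow> f x v I * (1 + (norm v)^2 + I powr (2/\<delta>)) powr (q/2)) \<le> N"
  and rpos: "0 < rho f x" and Tpos: "0 < T_delta \<delta> f x"
  shows "rho f x * norm (bulk_U f x) powr (3+\<delta>+q) \<le> (32 * 2 powr (q-1) * (8*(3+\<delta>)) powr (3+\<delta>)) * N
     * ((T_delta \<delta> f x + (norm (bulk_U f x))^2) * T_delta \<delta> f x) powr ((3+\<delta>)/2)"
proof -
  define g where "g = (\<lambda>z::(real^3)\<times>real. f x (fst z) (snd z))"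
  define w where "w = (\<lambda>z::(real^3)\<times>real. 1 + (norm (fst z))^2 + snd z powr (2/\<delta>))"
  define \<rho> where "\<rho> = rho f x"
  define U where "U = bulk_U f x"
  define a where "a = norm U"
  define T where "T = T_delta \<delta> f x"
  have gnn: "\<And>z. 0 \<le> g z" using nn by (simp add: g_def)
  have w1: "\<And>z. 1 \<le> w z" by (simp add: w_def)
  have gm[measurable]: "g \<in> borel_measurable VImeas" using meas by (simp add: g_def split_beta')
  have wm[measurable]: "w \<in> borel_measurable VImeas" unfolding w_def by measurable
  have iwg: "integrable VImeas (\<lambda>z. w z * g z)" using int by (simp add: g_def w_def split_beta')
  have ib: "integrable VImeas h" if hm: "h \<in> borel_measurable VImeas" and hb: "\<And>z. norm (h z) \<le> c * (w z * g z)"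
    for h :: "_ \<Rightarrow> 'b::{banach,second_countable_topology}" and c :: real
  proof (rule Bochner_Integration.integrable_bound[OF integrable_mult_right[OF iwg, of c] hm])
    show "AE z in VImeas. norm (h z) \<le> norm (c * (w z * g z))"
    proof (rule AE_I2)
      fix z show "norm (h z) \<le> norm (c * (w z * g z))"
        using order_trans[OF hb[of z] abs_ge_self] by simp
    qed
  qed
  have nv: "norm (fst z) \<le> w z" for z
  proof -
    have "0 \<le> (norm (fst z) - 1)^2" by simp
    then have "2 * norm (fst z) \<le> 1 + (norm (fst z))^2" by (simp add: power2_eq_square algebra_simps)
    then have "norm (fst z) \<le> 1 + (norm (fst z))^2" using norm_ge_zero[of "fst z"] by linarith
    moreover have "0 \<le> snd z powr (2/\<delta>)" by simp
    ultimately show ?thesis unfolding w_def by linarith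
  qed
  have ig: "integrable VImeas g"
  proof (rule ib[of g 1])
    fix z show "norm (g z) \<le> 1 * (w z * g z)"
      using mult_right_mono[OF w1[of z] gnn[of z]] gnn[of z] by simp
  qed simp
  have igv: "integrable VImeas (\<lambda>z. g z *\<^sub>R fst z)"
  proof (rule ib[of _ 1])
    fix z show "norm (g z *\<^sub>R fst z) \<le> 1 * (w z * g z)"
      using mult_right_mono[OF nv[of z] gnn[of z]] gnn[of z] by (simp add: mult.commute)
  qed simp
  have rho_eq: "\<rho> = (\<integral>z. g z \<partial>VImeas)" unfolding \<rho>_def rho_def g_def by (simp add: split_beta')
  have U_eq: "U = (1/\<rho>) *\<^sub>R (\<integral>z. g z *\<^sub>R fst z \<partial>VImeas)"
    unfolding U_def bulk_U_def \<rho>_def g_def by (simp add: split_beta')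
  have rp: "\<rho> > 0" using rpos by (simp add: \<rho>_def)
  have Tp: "T > 0" using Tpos by (simp add: T_def)
  define A where "A = (\<integral>z. (norm (fst z - U))^2 * g z \<partial>VImeas)"
  define B where "B = (\<integral>z. snd z powr (2/\<delta>) * g z \<partial>VImeas)"
  have Ttr: "T_tr f x = 2/(3*\<rho>) * (1/2 * A)"
  proof -
    have "(\<lambda>(v,I). (1/2) * (norm (v - bulk_U f x))^2 * f x v I) = (\<lambda>z. 1/2 * ((norm (fst z - U))^2 * g z))"
      by (simp add: split_beta' U_def g_def)
    then show ?thesis unfolding T_tr_def A_def \<rho>_def by simp
  qed
  have TI: "T_I \<delta> f x = 2/(\<delta>*\<rho>) * B"
  proof -
    have "(\<lambda>(v,I). I powr (2/\<delta>) * f x v I) = (\<lambda>z. snd z powr (2/\<delta>) * g z)"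
      by (simp add: split_beta' g_def)
    then show ?thesis unfolding T_I_def B_def \<rho>_def by simp
  qed
  have TAB: "(3+\<delta>)*\<rho>*T = A + 2*B"
  proof -
    have d3: "3+\<delta> \<noteq> 0" "\<delta> \<noteq> 0" "\<rho> \<noteq> 0" using dq rp by auto
    have e1: "(3+\<delta>)*\<rho>*(3/(3+\<delta>) * (2/(3*\<rho>) * (1/2 * A))) = A" using d3 by simp
    have e2: "(3+\<delta>)*\<rho>*(\<delta>/(3+\<delta>) * (2/(\<delta>*\<rho>) * B)) = 2*B" using d3 by simp
    show ?thesis unfolding T_def T_delta_def Ttr TI distrib_left e1 e2 ..
  qed
  have iU: "(\<integral>z. g z *\<^sub>R fst z \<partial>VImeas) = \<rho> *\<^sub>R U"
    using rp unfolding U_eq by simp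
  have ra: "(\<integral>z. g z * (fst z \<bullet> U) \<partial>VImeas) = \<rho> * a^2"
  proof -
    have "(\<integral>z. g z * (fst z \<bullet> U) \<partial>VImeas) = (\<integral>z. (g z *\<^sub>R fst z) \<bullet> U \<partial>VImeas)"
      by simp
    also have "\<dots> = (\<integral>z. g z *\<^sub>R fst z \<partial>VImeas) \<bullet> U"
      by (rule integral_inner_left) (rule igv)
    also have "\<dots> = \<rho> * a^2" unfolding iU a_def by (simp add: power2_norm_eq_inner)
    finally show ?thesis .
  qed
  have goal: "\<rho> * a powr (3+\<delta>+q) \<le> 32 * 2 powr (q-1) * (8*(3+\<delta>)) powr (3+\<delta>) * N * (T*(T+a^2)) powr ((3+\<delta>)/2)"
  proof (cases "a = 0")
    case True
    then show ?thesis using Npos by simp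
  next
    case False
    then have ap: "a > 0" by (simp add: a_def)
    define K where "K = 8*(3+\<delta>)"
    define P where "P = T*(T+a^2)"
    define s where "s = K * sqrt P / a"
    have K1: "K \<ge> 1" using dq by (simp add: K_def)
    have Pp: "P > 0" using Tp unfolding P_def by (simp add: add_pos_nonneg)
    have sqP: "T \<le> sqrt P"
    proof -
      have "T^2 \<le> P" using Tp by (simp add: P_def power2_eq_square algebra_simps)
      then show ?thesis using Tp by (simp add: real_le_rsqrt)
    qed
    have sp: "s > 0" using K1 Pp ap by (simp add: s_def)
    have asK: "K * T \<le> a * s" using ap K1 sqP by (simp add: s_def)
    have s2: "s^2 = K^2 * P / a^2" using Pp by (simp add: s_def power_divide power_mult_distrib)
    have s2T: "8*(3+\<delta>)*T \<le> s^2"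
    proof -
      have "K^2 * T \<le> s^2" unfolding s2 using ap Tp K1 by (simp add: P_def field_simps power2_eq_square)
      moreover have "K*T \<le> K^2*T" using K1 Tp by (simp add: power2_eq_square)
      ultimately show ?thesis by (simp add: K_def)
    qed
    define E where "E = (\<lambda>z::(real^3)\<times>real. (norm (fst z - U))^2 + 2 * snd z powr (2/\<delta>))"
    define h where "h = (\<lambda>z. if a/2 < norm (fst z) \<and> E z \<le> s^2 then g z * norm (fst z) else 0)"
    have Em[measurable]: "E \<in> borel_measurable VImeas" unfolding E_def by measurable
    have hm[measurable]: "h \<in> borel_measurable VImeas" unfolding h_def by measurable
    have nv2: "(norm (fst z))^2 \<le> w z" for z :: "(real^3)\<times>real" by (simp add: w_def)
    have pw2: "snd z powr (2/\<delta>) \<le> w z" for z :: "(real^3)\<times>real" by (simp add: w_def)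
    have iA: "integrable VImeas (\<lambda>z. (norm (fst z - U))^2 * g z)"
    proof (rule ib[of _ "2 + 2*a^2"])
      fix z :: "(real^3)\<times>real"
      have "norm (fst z - U) \<le> norm (fst z) + a" unfolding a_def by (rule norm_triangle_ineq4)
      then have "(norm (fst z - U))^2 \<le> (norm (fst z) + a)^2"
        by (simp add: power_mono)
      also have "\<dots> \<le> 2*(norm (fst z))^2 + 2*a^2"
        using sum_squares_ge_zero[of "norm (fst z) - a" 0] by (simp add: power2_eq_square algebra_simps)
      also have "\<dots> \<le> (2 + 2*a^2) * w z"
      proof -
        have "2*(norm (fst z))^2 \<le> 2 * w z" using nv2[of z] by simp
        moreover have "2*a^2 \<le> 2*a^2 * w z" using w1[of z] mult_left_mono[of 1 "w z" "2*a^2"] by simp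
        ultimately show ?thesis by (simp add: distrib_right)
      qed
      finally have "(norm (fst z - U))^2 * g z \<le> (2 + 2*a^2) * w z * g z"
        using gnn[of z] by (rule mult_right_mono)
      then show "norm ((norm (fst z - U))^2 * g z) \<le> (2 + 2*a^2) * (w z * g z)"
        using gnn[of z] by (simp add: mult.assoc)
    qed simp
    have iB: "integrable VImeas (\<lambda>z. snd z powr (2/\<delta>) * g z)"
    proof (rule ib[of _ 1])
      fix z show "norm (snd z powr (2/\<delta>) * g z) \<le> 1 * (w z * g z)"
        using mult_right_mono[OF pw2[of z] gnn[of z]] gnn[of z] by simp
    qed simp
    have Eeq: "(\<lambda>z. E z * g z) = (\<lambda>z. (norm (fst z - U))^2 * g z + 2 * (snd z powr (2/\<delta>) * g z))"
      by (simp add: E_def fun_eq_iff algebra_simps)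
    have iE: "integrable VImeas (\<lambda>z. E z * g z)" unfolding Eeq using iA iB by simp
    have intE: "(\<integral>z. E z * g z \<partial>VImeas) = A + 2*B" unfolding Eeq A_def B_def using iA iB by simp
    have ih: "integrable VImeas h"
    proof (rule ib[of _ 1])
      fix z show "norm (h z) \<le> 1 * (w z * g z)"
        using mult_left_mono[OF nv[of z] gnn[of z]] gnn[of z] mult_nonneg_nonneg[OF order_trans[OF zero_le_one w1[of z]] gnn[of z]]
        by (simp add: h_def mult.commute)
    qed simp
    have iL: "integrable VImeas (\<lambda>z. g z * (fst z \<bullet> U))"
    proof (rule ib[of _ a])
      fix z :: "(real^3)\<times>real"
      have "\<bar>fst z \<bullet> U\<bar> \<le> norm (fst z) * a" unfolding a_def by (rule Cauchy_Schwarz_ineq2)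
      also have "\<dots> \<le> w z * a" using nv[of z] ap by (simp add: mult_right_mono)
      finally have cs: "\<bar>fst z \<bullet> U\<bar> \<le> w z * a" .
      show "norm (g z * (fst z \<bullet> U)) \<le> a * (w z * g z)"
      proof -
        have "g z * \<bar>fst z \<bullet> U\<bar> \<le> g z * (w z * a)" using cs gnn[of z] by (rule mult_left_mono)
        then show ?thesis using gnn[of z] by (simp add: abs_mult mult_ac)
      qed
    qed simp
    define cc where "cc = a^2/s^2 + a/s"
    have ccnn: "cc \<ge> 0" using ap sp by (simp add: cc_def)
    have pw: "g z * (fst z \<bullet> U) \<le> g z * (a^2/2) + a * h z + cc * (E z * g z)" for z
    proof -
      define nz where "nz = norm (fst z)"
      define d where "d = norm (fst z - U)"
      have cs: "fst z \<bullet> U \<le> nz * a" unfolding nz_def a_def by (rule norm_cauchy_schwarz)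
      have dE: "d^2 \<le> E z" unfolding d_def E_def by simp
      have Enn: "0 \<le> E z" unfolding E_def by simp
      have tri: "nz \<le> d + a" unfolding nz_def d_def a_def using norm_triangle_sub[of "fst z" U] by simp
      have dnn: "0 \<le> d" "0 \<le> nz" unfolding d_def nz_def by simp_all
      define ind where "ind = (if a/2 < nz \<and> E z \<le> s^2 then a * nz else 0)"
      have indnn: "0 \<le> ind" using ap dnn by (simp add: ind_def)
      have Q: "fst z \<bullet> U \<le> a^2/2 + ind + cc * E z"
      proof (cases "a/2 < nz")
        case False
        have "nz * a \<le> a/2 * a" using False ap by (intro mult_right_mono) auto
        then have "fst z \<bullet> U \<le> a^2/2" using cs by (simp add: power2_eq_square)
        moreover have "0 \<le> cc * E z" using ccnn Enn by simp
        ultimately show ?thesis using indnn by linarith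
      next
        case True
        show ?thesis
        proof (cases "E z \<le> s^2")
          case True2: True
          have h1: "ind = a * nz" using True True2 by (simp add: ind_def)
          have h2: "0 \<le> cc * E z" using ccnn Enn by simp
          have h3: "0 \<le> a^2/2" by simp
          have h4: "fst z \<bullet> U \<le> a * nz" using cs by (simp add: mult.commute)
          show ?thesis using h1 h2 h3 h4 by linarith
        next
          case False
          then have sE: "s^2 < E z" by simp
          have "2 * d * s \<le> d^2 + s^2" using sum_squares_ge_zero[of "d - s" 0] by (simp add: power2_eq_square algebra_simps)
          then have "d * s \<le> E z" using dE sE by linarith
          then have ds: "d \<le> E z / s" using sp by (simp add: field_simps)
          have e1: "a * d \<le> a * (E z / s)" using ds ap by (intro mult_left_mono) auto
          have "a^2 * 1 \<le> a^2 * (E z / s^2)" using sE sp by (intro mult_left_mono) (auto simp: field_simps)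
          then have e2: "a^2 \<le> a^2 / s^2 * E z" by simp
          have "nz * a \<le> (d + a) * a" using tri ap by (simp add: mult_right_mono)
          then have "fst z \<bullet> U \<le> a * d + a^2" using cs by (simp add: algebra_simps power2_eq_square)
          moreover have "cc * E z = a^2 / s^2 * E z + a * (E z / s)" by (simp add: cc_def algebra_simps)
          ultimately show ?thesis using e1 e2 indnn by (smt (verit) zero_le_power2 divide_nonneg_nonneg)
        qed
      qed
      have "g z * (fst z \<bullet> U) \<le> g z * (a^2/2 + ind + cc * E z)" using Q gnn[of z] by (rule mult_left_mono)
      moreover have "g z * ind = a * h z" by (simp add: ind_def h_def nz_def)
      ultimately show ?thesis by (simp add: algebra_simps)
    qed
    have main1: "\<rho> * a^2 \<le> \<rho> * (a^2/2) + a * (\<integral>z. h z \<partial>VImeas) + cc * (A + 2*B)"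
    proof -
      have "\<rho> * a^2 = (\<integral>z. g z * (fst z \<bullet> U) \<partial>VImeas)" using ra by simp
      also have "\<dots> \<le> (\<integral>z. g z * (a^2/2) + a * h z + cc * (E z * g z) \<partial>VImeas)"
        by (rule integral_mono) (use iL ig ih iE pw in auto)
      also have "\<dots> = \<rho> * (a^2/2) + a * (\<integral>z. h z \<partial>VImeas) + cc * (A + 2*B)"
        using ig ih iE by (simp add: rho_eq intE)
      finally show ?thesis .
    qed
    have c1: "a^2/s^2 * ((3+\<delta>)*T) \<le> a^2/8"
    proof -
      have "(3+\<delta>)*T \<le> s^2/8" using s2T by (simp add: algebra_simps)
      then have "a^2/s^2 * ((3+\<delta>)*T) \<le> a^2/s^2 * (s^2/8)" by (rule mult_left_mono) simp
      also have "\<dots> = a^2/8" using sp by simp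
      finally show ?thesis .
    qed
    have c2: "a/s * ((3+\<delta>)*T) \<le> a^2/8"
    proof -
      have "(3+\<delta>)*T \<le> a * s/8" using asK by (simp add: K_def algebra_simps)
      then have "a/s * ((3+\<delta>)*T) \<le> a/s * (a * s/8)" using ap sp by (intro mult_left_mono) auto
      also have "\<dots> = a^2/8" using sp by (simp add: power2_eq_square)
      finally show ?thesis .
    qed
    have "cc * (A + 2*B) = \<rho> * (a^2/s^2 * ((3+\<delta>)*T) + a/s * ((3+\<delta>)*T))"
      unfolding TAB[symmetric] cc_def using sp by (simp add: field_simps)
    also have "\<dots> \<le> \<rho> * (a^2/4)"
    proof (rule mult_left_mono)
      show "a^2/s^2 * ((3+\<delta>)*T) + a/s * ((3+\<delta>)*T) \<le> a^2/4" using c1 c2 by linarith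
    qed (use rp in simp)
    finally have c3: "cc * (A + 2*B) \<le> \<rho> * (a^2/4)" .
    have "\<rho> * a * a \<le> (4 * (\<integral>z. h z \<partial>VImeas)) * a"
      using main1 c3 by (simp add: power2_eq_square algebra_simps)
    then have ra4: "\<rho> * a \<le> 4 * (\<integral>z. h z \<partial>VImeas)" using ap by simp
    define t where "t = (s^2/2) powr (\<delta>/2)"
    define Db where "Db = cbox (U - s *\<^sub>R 1) (U + s *\<^sub>R 1) \<times> {0<..t}"
    define c0 where "c0 = N * (a/2) powr (1-q)"
    have c0nn: "0 \<le> c0" using Npos by (simp add: c0_def)
    have tnn: "0 \<le> t" by (simp add: t_def)
    have Dbe: "emeasure VImeas Db = ennreal ((2 * s) ^ 3 * t)"
      unfolding Db_def by (rule measure_box) (use sp tnn in auto)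
    have Dbs: "Db \<in> sets VImeas"
      unfolding Db_def VImeas_def by (rule pair_measureI) (auto simp: sets_restrict_space)
    have Dbsp: "Db \<inter> space VImeas = Db" by (auto simp: Db_def space_VI)
    have iDb: "integrable VImeas (indicator Db :: _ \<Rightarrow> real)"
      unfolding integrable_indicator_iff Dbsp using Dbs Dbe by simp
    have mDb: "measure VImeas Db = (2 * s) ^ 3 * t"
      using Dbe sp tnn by (simp add: measure_def)
    have hb: "(\<integral>z. h z \<partial>VImeas) \<le> c0 * ((2 * s) ^ 3 * t)"
    proof -
      have "AE z in VImeas. h z \<le> c0 * indicator Db z"
        using bnd AE_space[of VImeas]
      proof eventually_elim
        case (elim z)
        have zb: "g z * w z powr (q/2) \<le> N" using elim(1) by (simp add: g_def w_def split_beta)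
        have zpos: "0 < snd z" using elim(2) by (auto simp: space_VI)
        show ?case
        proof (cases "a/2 < norm (fst z) \<and> E z \<le> s^2")
          case False
          then have "h z = 0" unfolding h_def by (simp only: if_False)
          then show ?thesis using c0nn by simp
        next
          case True
          define nz where "nz = norm (fst z)"
          have nzp: "nz > 0" "a/2 < nz" using True ap by (auto simp: nz_def)
          have dE: "(norm (fst z - U))^2 \<le> s^2" using True by (simp add: E_def) (smt (verit) powr_ge_zero)
          then have dn: "norm (fst z - U) \<le> s" using sp by (simp add: power2_le_iff_abs_le)
          have inbox: "fst z \<in> cbox (U - s *\<^sub>R 1) (U + s *\<^sub>R 1)"
          proof -
            have "\<bar>(fst z - U) $ i\<bar> \<le> s" for i using component_le_norm_cart[of "fst z - U" i] dn by linarith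
            then show ?thesis by (auto simp: mem_box_cart abs_le_iff algebra_simps)
          qed
          have Ib: "snd z powr (2/\<delta>) \<le> s^2/2" using True by (simp add: E_def) (smt (verit) zero_le_power2)
          have "snd z = (snd z powr (2/\<delta>)) powr (\<delta>/2)"
            using zpos dq by (simp add: powr_powr)
          also have "\<dots> \<le> (s^2/2) powr (\<delta>/2)" using Ib dq by (intro powr_mono2) auto
          finally have "snd z \<le> t" by (simp add: t_def)
          then have zD: "z \<in> Db" using inbox zpos by (simp add: Db_def mem_Times_iff)
          have "nz powr q = (nz^2) powr (q/2)"
          proof -
            have "nz^2 = nz powr 2" using nzp by simp
            then show ?thesis by (simp add: powr_powr)
          qed
          also have "\<dots> \<le> w z powr (q/2)" using nv2[of z] dq by (intro powr_mono2) (auto simp: nz_def)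
          finally have p1: "nz powr q \<le> w z powr (q/2)" .
          have p2: "g z * nz powr q \<le> N" using mult_left_mono[OF p1 gnn[of z]] zb by linarith
          have p3: "nz powr (1-q) \<le> (a/2) powr (1-q)" using dq nzp ap by (intro powr_mono2') auto
          have "g z * nz = (g z * nz powr q) * nz powr (1-q)"
            using nzp by (simp add: mult.assoc powr_add[symmetric])
          also have "\<dots> \<le> N * (a/2) powr (1-q)"
            using p2 p3 gnn[of z] Npos by (intro mult_mono) auto
          finally show ?thesis using True zD by (simp add: h_def c0_def nz_def)
        qed
      qed
      then have "(\<integral>z. h z \<partial>VImeas) \<le> (\<integral>z. c0 * indicator Db z \<partial>VImeas)"
        by (intro integral_mono_AE ih) (use iDb in simp)
      also have "\<dots> = c0 * ((2 * s) ^ 3 * t)" using mDb Dbsp by simp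
      finally show ?thesis .
    qed
    have st: "(2 * s) ^ 3 * t \<le> 8 * s powr (3+\<delta>)"
    proof -
      have "t \<le> (s^2) powr (\<delta>/2)" unfolding t_def using dq by (intro powr_mono2) auto
      also have "(s^2) powr (\<delta>/2) = s powr \<delta>"
      proof -
        have "s^2 = s powr 2" using sp by simp
        then have "(s^2) powr (\<delta>/2) = s powr (2 * (\<delta>/2))" by (simp add: powr_powr)
        then show ?thesis by simp
      qed
      finally have t1: "t \<le> s powr \<delta>" .
      have e: "s^3 * s powr \<delta> = s powr (3+\<delta>)"
      proof -
        have "s^3 = s powr 3" using sp by simp
        then show ?thesis by (simp add: powr_add)
      qed
      have e2: "(2 * s) ^ 3 * t = 8 * (s^3 * t)" by (simp add: power_mult_distrib)
      have "s^3 * t \<le> s^3 * s powr \<delta>" by (rule mult_left_mono[OF t1]) (use sp in simp)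
      then show ?thesis unfolding e2 e by simp
    qed
    have "\<rho> * a \<le> 4 * (c0 * ((2 * s) ^ 3 * t))" using ra4 hb by linarith
    also have "\<dots> \<le> 4 * (c0 * (8 * s powr (3+\<delta>)))" using st c0nn by (intro mult_left_mono) auto
    finally have "\<rho> * a \<le> 32 * N * (a/2) powr (1-q) * s powr (3+\<delta>)" by (simp add: c0_def)
    from alg[OF ap _ Pp s_def this] K1 show ?thesis by (simp add: K_def P_def)
  qed
  have "T*(T+a^2) = (T+a^2)*T" by (rule mult.commute)
  then have g2: "\<rho> * a powr (3+\<delta>+q) \<le> 32 * 2 powr (q-1) * (8*(3+\<delta>)) powr (3+\<delta>) * N * ((T+a^2)*T) powr ((3+\<delta>)/2)"
    using goal by metis
  show ?thesis using g2 unfolding \<rho>_def a_def U_def T_def by simp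
qed

theorem lemma3p4:
  fixes \<delta> q :: real
  assumes "\<delta> > 0" and "q \<ge> 1"
  shows "\<exists>C>0. \<forall>f :: real^3 \<Rightarrow> real^3 \<Rightarrow> real \<Rightarrow> real.
     (\<forall>x v I. 0 \<le> f x v I) \<longrightarrow>
     (\<lambda>(x,(v,I)). f x v I) \<in> borel_measurable Fullmeas \<longrightarrow>
     0 < Linfq_norm \<delta> q f \<longrightarrow> Linfq_norm \<delta> q f < \<infinity> \<longrightarrow>
     (AE x in Xmeas.
        0 < rho f x \<longrightarrow>
        integrable VImeas (\<lambda>(v,I). (1 + (norm v)^2 + I powr (2/\<delta>)) * f x v I) \<longrightarrow>
        0 < T_delta \<delta> f x \<longrightarrow>
        rho f x * norm (bulk_U f x) powr (3 + \<delta> + q)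
          / ((T_delta \<delta> f x + (norm (bulk_U f x))^2) * T_delta \<delta> f x) powr ((3 + \<delta>) / 2)
        \<le> C * real_of_ereal (Linfq_norm \<delta> q f))"
proof (intro exI[of _ "32 * 2 powr (q-1) * (8*(3+\<delta>)) powr (3+\<delta>)"] conjI allI impI)
  show "0 < 32 * 2 powr (q-1) * (8*(3+\<delta>)) powr (3+\<delta>)" using assms by simp
  fix f :: "real^3 \<Rightarrow> real^3 \<Rightarrow> real \<Rightarrow> real"
  assume nn: "\<forall>x v I. 0 \<le> f x v I"
    and meas: "(\<lambda>(x,(v,I)). f x v I) \<in> borel_measurable Fullmeas"
    and pos: "0 < Linfq_norm \<delta> q f" and fin: "Linfq_norm \<delta> q f < \<infinity>"
  define N where "N = real_of_ereal (Linfq_norm \<delta> q f)"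
  have LN: "Linfq_norm \<delta> q f = ereal N" using pos fin unfolding N_def
    by (cases "Linfq_norm \<delta> q f") auto
  have Npos: "N > 0" using pos LN by simp
  interpret X: sigma_finite_measure Xmeas by (rule sf_X)
  interpret V: sigma_finite_measure VImeas by (rule sf_VI)
  interpret XV: pair_sigma_finite Xmeas VImeas ..
  have ae1: "AE z in Fullmeas. (\<lambda>(x,(v,I)). ereal (\<bar>f x v I\<bar> * (1 + (norm v)^2 + I powr (2/\<delta>)) powr (q/2))) z \<le> ereal N"
    using esssup_AE[where M=Fullmeas and f="\<lambda>(x,(v,I)). ereal (\<bar>f x v I\<bar> * (1 + (norm v)^2 + I powr (2/\<delta>)) powr (q/2))"]
    unfolding LN[symmetric] Linfq_norm_def .
  then have ae2: "AE x in Xmeas. AE y in VImeas. (\<lambda>(x,(v,I)). ereal (\<bar>f x v I\<bar> * (1 + (norm v)^2 + I powr (2/\<delta>)) powr (q/2))) (x,y) \<le> ereal N"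
    unfolding Fullmeas_def by (rule XV.AE_pair)
  show "AE x in Xmeas.
        0 < rho f x \<longrightarrow>
        integrable VImeas (\<lambda>(v,I). (1 + (norm v)^2 + I powr (2/\<delta>)) * f x v I) \<longrightarrow>
        0 < T_delta \<delta> f x \<longrightarrow>
        rho f x * norm (bulk_U f x) powr (3 + \<delta> + q)
          / ((T_delta \<delta> f x + (norm (bulk_U f x))^2) * T_delta \<delta> f x) powr ((3 + \<delta>) / 2)
        \<le> (32 * 2 powr (q-1) * (8*(3+\<delta>)) powr (3+\<delta>)) * real_of_ereal (Linfq_norm \<delta> q f)"
    using ae2 AE_space[of Xmeas]
  proof eventually_elim
    case (elim x)
    show ?case
    proof (intro impI)
      assume rp: "0 < rho f x"
        and int: "integrable VImeas (\<lambda>(v,I). (1 + (norm v)^2 + I powr (2/\<delta>)) * f x v I)"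
        and Tp: "0 < T_delta \<delta> f x"
      have mx: "(\<lambda>(v,I). f x v I) \<in> borel_measurable VImeas"
        using measurable_Pair2[OF meas[unfolded Fullmeas_def] elim(2)] by (simp add: split_beta')
      have bnd: "AE z in VImeas. (case z of (v,I) \<Rightarrow> f x v I * (1 + (norm v)^2 + I powr (2/\<delta>)) powr (q/2)) \<le> N"
        using elim(1) by eventually_elim (use nn in \<open>auto simp: split_beta\<close>)
      have c: "rho f x * norm (bulk_U f x) powr (3+\<delta>+q) \<le> (32 * 2 powr (q-1) * (8*(3+\<delta>)) powr (3+\<delta>)) * N
         * ((T_delta \<delta> f x + (norm (bulk_U f x))^2) * T_delta \<delta> f x) powr ((3+\<delta>)/2)"
        by (rule core[OF assms Npos _ mx int bnd rp Tp]) (use nn in blast)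
      have dp: "0 < ((T_delta \<delta> f x + (norm (bulk_U f x))^2) * T_delta \<delta> f x) powr ((3+\<delta>)/2)"
      proof -
        have "0 < T_delta \<delta> f x + (norm (bulk_U f x))^2" using Tp by (simp add: add_pos_nonneg)
        then show ?thesis using Tp by simp
      qed
      show "rho f x * norm (bulk_U f x) powr (3 + \<delta> + q)
          / ((T_delta \<delta> f x + (norm (bulk_U f x))^2) * T_delta \<delta> f x) powr ((3 + \<delta>) / 2)
        \<le> (32 * 2 powr (q-1) * (8*(3+\<delta>)) powr (3+\<delta>)) * real_of_ereal (Linfq_norm \<delta> q f)"
        using c dp unfolding N_def[symmetric] by (simp add: divide_le_eq mult.assoc)
    qed
  qed
qed

end
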